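(* Let $(X,d,\preccurlyeq)$ be a preordered $s$-regular $b$-metric space. Let $T,S:X\to X$ be self mappings and suppose there exists $x_0\in X$ such that $T(x_0)\preccurlyeq S(x_0)$. Suppose that: (i) $T$ is isotone; (ii) $S$ covers $T$ on the set $O_X(x_0)$; (iii) every chain $C\in\mathcal{C}(x_0,T,S,\preccurlyeq)$ has a lower bound $w\in X$ (i.e. $w\preccurlyeq x$ for all $x\in C$) satisfying $w\preccurlyeq T(w)$, and there exists $z\in X$ such that $S^i(z)\preccurlyeq S(w)\preccurlyeq T(w)$ for all $i\in\mathbb{N}$ and $d(T^i(w),S^i(z))\to 0$ as $i\to\infty$. Then the set $\mathrm{Coin}(T,S)\cap O_X(x_0)$ is nonempty and contains a minimal element.
   Context: A $b$-metric space with coefficient $s\ge 1$ is a nonempty set $X$ with a function $d:X\times X\to[0,\infty)$ such that for all $x,y,z\in X$: $d(x,y)=0$ iff $x=y$; $d(x,y)=d(y,x)$; $d(x,y)\le s[d(x,z)+d(z,y)]$. A preorder is a reflexive and transitive binary relation $\preccurlyeq$; $x\succcurlyeq y$ means $y\preccurlyeq x$, and $x\prec y$ means $x\preccurlyeq y$ and $x\ne y$. A preordered $s$-regular $b$-metric space $(X,d,\preccurlyeq)$ is a $b$-metric space with coefficient $s\ge1$ equipped with a preorder $\preccurlyeq$ such that for all $x,y,z\in X$, $x\preccurlyeq y\preccurlyeq z$ implies $\max\{d(x,y),d(y,z)\}\le s^2 d(x,z)$. A chain is a subset of $X$ any two elements of which are comparable under $\preccurlyeq$. A map $T:X\to X$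 is isotone if $x\preccurlyeq y$ implies $T(x)\preccurlyeq T(y)$. $T^i$ denotes the $i$-th iterate of $T$. For $x_0\in X$, $O_X(x_0)=\{x\in X: x\preccurlyeq x_0\}$. $\mathrm{Coin}(T,S)=\{x\in X: T(x)=S(x)\}$. A map $S$ covers a map $T$ on a set $A\subset X$ if for every $x\in A$ with $T(x)\preccurlyeq S(x)$ there exists $y\in X$ with $y\preccurlyeq x$ and $S(y)=T(x)$. $\mathcal{C}(T,S,\preccurlyeq)$ is the set of chains $C\subset X$ such that for all $x,y\in C$: $T(x)\preccurlyeq S(x)$; $x\prec y$ implies $S(x)\preccurlyeq T(y)$; and $S(C)\subset T(X)$. $\mathcal{C}(x_0,T,S,\preccurlyeq)=\{C\in\mathcal{C}(T,S,\preccurlyeq): C\subset O_X(x_0)\text{ and } S(C)\subset T(O_X(x_0))\}$. A minimal element of a set $A\subset X$ is an element $w\in A$ such that there is no $u\in A$ with $u\prec w$. *)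

theory Defs
  imports "HOL-Analysis.Analysis"
begin

text \<open>The whole type 'a plays the role of the nonempty set X.\<close>

definition b_metric :: "('a \<Rightarrow> 'a \<Rightarrow> real) \<Rightarrow> real \<Rightarrow> bool" where
  "b_metric d s \<longleftrightarrow> s \<ge> 1 \<and>
     (\<forall>x y. d x y \<ge> 0) \<and>
     (\<forall>x y. d x y = 0 \<longleftrightarrow> x = y) \<and>
     (\<forall>x y. d x y = d y x) \<and>
     (\<forall>x y z. d x y \<le> s * (d x z + d z y))"

definition is_preorder :: "('a \<Rightarrow> 'a \<Rightarrow> bool) \<Rightarrow> bool" where
  "is_preorder le \<longleftrightarrow> (\<forall>x. le x x) \<and> (\<forall>x y z. le x y \<longrightarrow> le y z \<longrightarrow> le x z)"

definition strict :: "('a \<Rightarrow> 'a \<Rightarrow> bool) \<Rightarrow> 'a \<Rightarrow> 'a \<Rightarrow> bool" where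
  "strict le x y \<longleftrightarrow> le x y \<and> x \<noteq> y"

definition preordered_s_regular_b_metric ::
  "('a \<Rightarrow> 'a \<Rightarrow> real) \<Rightarrow> real \<Rightarrow> ('a \<Rightarrow> 'a \<Rightarrow> bool) \<Rightarrow> bool" where
  "preordered_s_regular_b_metric d s le \<longleftrightarrow> b_metric d s \<and> is_preorder le \<and>
     (\<forall>x y z. le x y \<longrightarrow> le y z \<longrightarrow> max (d x y) (d y z) \<le> s\<^sup>2 * d x z)"

definition is_chain :: "('a \<Rightarrow> 'a \<Rightarrow> bool) \<Rightarrow> 'a set \<Rightarrow> bool" where
  "is_chain le C \<longleftrightarrow> (\<forall>x\<in>C. \<forall>y\<in>C. le x y \<or> le y x)"

definition isotone :: "('a \<Rightarrow> 'a \<Rightarrow> bool) \<Rightarrow> ('a \<Rightarrow> 'a) \<Rightarrow> bool" where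
  "isotone le T \<longleftrightarrow> (\<forall>x y. le x y \<longrightarrow> le (T x) (T y))"

definition O_X :: "('a \<Rightarrow> 'a \<Rightarrow> bool) \<Rightarrow> 'a \<Rightarrow> 'a set" where
  "O_X le x0 = {x. le x x0}"

definition Coin :: "('a \<Rightarrow> 'a) \<Rightarrow> ('a \<Rightarrow> 'a) \<Rightarrow> 'a set" where
  "Coin T S = {x. T x = S x}"

definition covers_on :: "('a \<Rightarrow> 'a \<Rightarrow> bool) \<Rightarrow> ('a \<Rightarrow> 'a) \<Rightarrow> ('a \<Rightarrow> 'a) \<Rightarrow> 'a set \<Rightarrow> bool" where
  "covers_on le S T A \<longleftrightarrow> (\<forall>x\<in>A. le (T x) (S x) \<longrightarrow> (\<exists>y. le y x \<and> S y = T x))"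

definition chains_TS :: "('a \<Rightarrow> 'a) \<Rightarrow> ('a \<Rightarrow> 'a) \<Rightarrow> ('a \<Rightarrow> 'a \<Rightarrow> bool) \<Rightarrow> 'a set set" where
  "chains_TS T S le = {C. is_chain le C \<and>
      (\<forall>x\<in>C. le (T x) (S x)) \<and>
      (\<forall>x\<in>C. \<forall>y\<in>C. strict le x y \<longrightarrow> le (S x) (T y)) \<and>
      S ` C \<subseteq> range T}"

definition chains_TS_x0 :: "'a \<Rightarrow> ('a \<Rightarrow> 'a) \<Rightarrow> ('a \<Rightarrow> 'a) \<Rightarrow> ('a \<Rightarrow> 'a \<Rightarrow> bool) \<Rightarrow> 'a set set" where
  "chains_TS_x0 x0 T S le = {C \<in> chains_TS T S le. C \<subseteq> O_X le x0 \<and> S ` C \<subseteq> T ` O_X le x0}"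

definition minimal_in :: "('a \<Rightarrow> 'a \<Rightarrow> bool) \<Rightarrow> 'a set \<Rightarrow> 'a \<Rightarrow> bool" where
  "minimal_in le A w \<longleftrightarrow> w \<in> A \<and> \<not> (\<exists>u\<in>A. strict le u w)"

end

theory Submission
  imports Defs
begin

theorem theorem2p1:
  fixes d :: "'a \<Rightarrow> 'a \<Rightarrow> real" and s :: real and le :: "'a \<Rightarrow> 'a \<Rightarrow> bool"
    and T S :: "'a \<Rightarrow> 'a" and x0 :: 'a
  assumes space: "preordered_s_regular_b_metric d s le"
    and x0: "le (T x0) (S x0)"
    and iso: "isotone le T"
    and cov: "covers_on le S T (O_X le x0)"
    and lb: "\<forall>C \<in> chains_TS_x0 x0 T S le. \<exists>w. (\<forall>x\<in>C. le w x) \<and> le w (T w) \<and>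
               (\<exists>z. (\<forall>i::nat. le ((S ^^ i) z) (S w) \<and> le (S w) (T w)) \<and>
                    (\<lambda>i. d ((T ^^ i) w) ((S ^^ i) z)) \<longlonglongrightarrow> 0)"
  shows "Coin T S \<inter> O_X le x0 \<noteq> {} \<and> (\<exists>w. minimal_in le (Coin T S \<inter> O_X le x0) w)"
proof -
  have bm: "b_metric d s" and po: "is_preorder le"
    and reg: "\<And>x y z. le x y \<Longrightarrow> le y z \<Longrightarrow> max (d x y) (d y z) \<le> s\<^sup>2 * d x z"
    using space unfolding preordered_s_regular_b_metric_def by auto
  have refl: "\<And>x. le x x" and trans: "\<And>x y z. le x y \<Longrightarrow> le y z \<Longrightarrow> le x z"
    using po unfolding is_preorder_def by blast+
  have d0: "\<And>x y. d x y \<ge> 0" and deq: "\<And>x y. d x y = 0 \<longleftrightarrow> x = y"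
    and dsym: "\<And>x y. d x y = d y x" and s1: "s \<ge> 1"
    using bm unfolding b_metric_def by auto
  have antisym: "x = y" if "le x y" "le y x" for x y
  proof -
    have "max (d x y) (d y x) \<le> s\<^sup>2 * d x x" using reg[OF that] .
    then have "d x y \<le> 0" using deq[of x x] by simp
    then show ?thesis using d0[of x y] deq[of x y] by linarith
  qed
  have isoT: "\<And>x y. le x y \<Longrightarrow> le (T x) (T y)" using iso unfolding isotone_def by blast
  define A where "A = chains_TS_x0 x0 T S le"
  obtain y where y: "le y x0" "S y = T x0"
    using cov x0 refl unfolding covers_on_def O_X_def by blast
  have yA: "{y} \<in> A"
    unfolding A_def chains_TS_x0_def chains_TS_def is_chain_def strict_def O_X_def
    using y refl isoT[OF y(1)] by auto
  have "\<forall>C\<in>chains A. \<Union>C \<in> A"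
  proof
    fix C assume C: "C \<in> chains A"
    then have CA: "C \<subseteq> A" and ch: "\<And>X Y. X \<in> C \<Longrightarrow> Y \<in> C \<Longrightarrow> X \<subseteq> Y \<or> Y \<subseteq> X"
      unfolding chains_def chain_subset_def by auto
    have mem: "\<And>X. X \<in> C \<Longrightarrow> is_chain le X \<and> (\<forall>x\<in>X. le (T x) (S x)) \<and>
      (\<forall>x\<in>X. \<forall>y\<in>X. strict le x y \<longrightarrow> le (S x) (T y)) \<and> S ` X \<subseteq> range T \<and>
      X \<subseteq> O_X le x0 \<and> S ` X \<subseteq> T ` O_X le x0"
      using CA unfolding A_def chains_TS_x0_def chains_TS_def by blast
    have two: "\<exists>X\<in>C. a \<in> X \<and> b \<in> X" if ab: "a \<in> \<Union>C" "b \<in> \<Union>C" for a b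
    proof -
      obtain X Y where "X \<in> C" "Y \<in> C" "a \<in> X" "b \<in> Y" using ab by blast
      then show ?thesis using ch[of X Y] by blast
    qed
    show "\<Union>C \<in> A"
      unfolding A_def chains_TS_x0_def chains_TS_def
    proof (intro CollectI conjI)
      show "is_chain le (\<Union>C)" unfolding is_chain_def
      proof (intro ballI)
        fix a b assume "a \<in> \<Union>C" "b \<in> \<Union>C"
        then obtain X where "X \<in> C" "a \<in> X" "b \<in> X" using two by blast
        then show "le a b \<or> le b a" using mem[of X] unfolding is_chain_def by blast
      qed
      show "\<forall>x\<in>\<Union>C. \<forall>y\<in>\<Union>C. strict le x y \<longrightarrow> le (S x) (T y)"
      proof (intro ballI impI)
        fix a b assume "a \<in> \<Union>C" "b \<in> \<Union>C" "strict le a b"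
        then obtain X where "X \<in> C" "a \<in> X" "b \<in> X" using two by blast
        then show "le (S a) (T b)" using mem[of X] \<open>strict le a b\<close> by blast
      qed
    qed (use mem in fast)+
  qed
  from Zorn_Lemma[OF this] obtain M where MA: "M \<in> A" and Mmax: "\<And>X. X \<in> A \<Longrightarrow> M \<subseteq> X \<Longrightarrow> X = M"
    by blast
  have Mne: "M \<noteq> {}"
  proof
    assume "M = {}" then have "{y} = M" using Mmax[OF yA] by simp
    then show False using \<open>M = {}\<close> by simp
  qed
  then obtain m where m: "m \<in> M" by blast
  have Mprops: "is_chain le M" "\<forall>x\<in>M. le (T x) (S x)"
      "\<forall>x\<in>M. \<forall>y\<in>M. strict le x y \<longrightarrow> le (S x) (T y)" "M \<subseteq> O_X le x0"
    using MA unfolding A_def chains_TS_x0_def chains_TS_def by auto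
  obtain w z where wl: "\<forall>x\<in>M. le w x" and wT: "le w (T w)"
    and zS: "\<And>i. le ((S ^^ i) z) (S w)" and SwTw: "le (S w) (T w)"
    and lim: "(\<lambda>i. d ((T ^^ i) w) ((S ^^ i) z)) \<longlonglongrightarrow> 0"
    using lb[rule_format, OF MA[unfolded A_def]] by blast
  have wO: "w \<in> O_X le x0"
    using wl m Mprops(4) trans unfolding O_X_def by blast
  have wTi: "le w ((T ^^ i) w)" for i
  proof (induction i)
    case 0 then show ?case using refl by simp
  next
    case (Suc i)
    have "le (T w) (T ((T ^^ i) w))" using isoT[OF Suc] .
    then show ?case using trans[OF wT] by simp
  qed
  have TwTi: "le (T w) ((T ^^ Suc i) w)" for i using isoT[OF wTi[of i]] by simp
  have bound: "d (S w) (T w) \<le> s\<^sup>2 * s\<^sup>2 * d ((T ^^ Suc i) w) ((S ^^ Suc i) z)" for i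
  proof -
    have SwTi: "le (S w) ((T ^^ Suc i) w)" using trans[OF SwTw TwTi] .
    have "d (S w) (T w) \<le> s\<^sup>2 * d (S w) ((T ^^ Suc i) w)"
      using reg[OF SwTw TwTi[of i]] by simp
    also have "d (S w) ((T ^^ Suc i) w) \<le> s\<^sup>2 * d ((S ^^ Suc i) z) ((T ^^ Suc i) w)"
      using reg[OF zS[of "Suc i"] SwTi] by (simp del: funpow.simps)
    finally show ?thesis using dsym
      by (simp add: mult.assoc mult_left_mono)
  qed
  have "(\<lambda>i. s\<^sup>2 * s\<^sup>2 * d ((T ^^ i) w) ((S ^^ i) z)) \<longlonglongrightarrow> s\<^sup>2 * s\<^sup>2 * 0"
    by (intro tendsto_mult_left lim)
  moreover have "\<exists>N. \<forall>n\<ge>N. d (S w) (T w) \<le> s\<^sup>2 * s\<^sup>2 * d ((T ^^ n) w) ((S ^^ n) z)"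
  proof (intro exI[of _ 1] allI impI)
    fix n :: nat assume "1 \<le> n"
    then obtain k where "n = Suc k" using not0_implies_Suc by fastforce
    then show "d (S w) (T w) \<le> s\<^sup>2 * s\<^sup>2 * d ((T ^^ n) w) ((S ^^ n) z)" using bound by simp
  qed
  ultimately have "d (S w) (T w) \<le> 0" by (intro LIMSEQ_le_const) simp_all
  then have TS: "T w = S w" using d0[of "S w" "T w"] deq[of "S w" "T w"] by simp
  have wC: "w \<in> Coin T S \<inter> O_X le x0" using TS wO unfolding Coin_def by simp
  have "minimal_in le (Coin T S \<inter> O_X le x0) w"
    unfolding minimal_in_def
  proof (intro conjI wC notI)
    assume "\<exists>u\<in>Coin T S \<inter> O_X le x0. strict le u w"
    then obtain u where uC: "T u = S u" and uO: "le u x0" and uw: "le u w" and une: "u \<noteq> w"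
      unfolding Coin_def O_X_def strict_def by blast
    have ux: "\<And>x. x \<in> M \<Longrightarrow> le u x" using uw wl trans by blast
    have a1: "is_chain le M" and a2: "\<forall>x\<in>M. le (T x) (S x)"
        and a3: "\<forall>x\<in>M. \<forall>y\<in>M. strict le x y \<longrightarrow> le (S x) (T y)"
        and a4: "S ` M \<subseteq> range T" and a5: "M \<subseteq> O_X le x0" and a6: "S ` M \<subseteq> T ` O_X le x0"
      using MA unfolding A_def chains_TS_x0_def chains_TS_def by auto
    have b1: "is_chain le (insert u M)" using a1 ux refl unfolding is_chain_def by blast
    have b2: "\<forall>x\<in>insert u M. le (T x) (S x)" using a2 uC refl by simp
    have b4: "S ` insert u M \<subseteq> range T" using a4 uC by (metis image_insert insert_subset rangeI)
    have uO': "u \<in> O_X le x0" using uO unfolding O_X_def by simp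
    have b5: "insert u M \<subseteq> O_X le x0" using a5 uO' by simp
    have b6: "S ` insert u M \<subseteq> T ` O_X le x0" using a6 uC uO' by (metis image_insert insert_subset imageI)
    have b3: "\<forall>x\<in>insert u M. \<forall>y\<in>insert u M. strict le x y \<longrightarrow> le (S x) (T y)"
    proof (intro ballI impI)
      fix x y assume xy: "x \<in> insert u M" "y \<in> insert u M" "strict le x y"
      show "le (S x) (T y)"
      proof (cases "x = u")
        case True
        then show ?thesis using uC isoT xy(3) unfolding strict_def by metis
      next
        case False
        then have xM: "x \<in> M" using xy by simp
        show ?thesis
        proof (cases "y = u")
          case True
          then have "le x u" "x \<noteq> u" using xy(3) unfolding strict_def by auto
          moreover have "le u x" using ux xM .
          ultimately show ?thesis using antisym by blast
        next
          case False
          then show ?thesis using xM xy a3 by simp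
        qed
      qed
    qed
    have "insert u M \<in> A" unfolding A_def chains_TS_x0_def chains_TS_def
      using b1 b2 b3 b4 b5 b6 by simp
    then have "insert u M = M" using Mmax by blast
    then have "u \<in> M" by blast
    then have "le w u" using wl by blast
    then show False using antisym uw une by blast
  qed
  then show ?thesis using wC by blast
qed

end
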